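(* Let $N\ge 2$ and $a>-1$. Let $\mathcal R_N$ be the set of $N\times N$ real correlation matrices $R=[\rho_{jk}]$ (real symmetric positive definite with unit diagonal), with Lebesgue measure $(\mathrm dR)=\prod_{1\le k<j\le N}\mathrm d\rho_{jk}$, and let $R$ be random with probability density $\frac{1}{C_{a,N}}(\det R)^a$ on $\mathcal R_N$, where $C_{a,N}=\int_{\mathcal R_N}(\det R)^a(\mathrm dR)$. Then for real $s>-1-a$, $$\mathbb E\left[(\det R)^s\right]=\prod_{j=1}^{N-1}\left(\frac{B\left(a+s+\frac{j+1}{2},\frac12\right)}{B\left(a+\frac{j+1}{2},\frac12\right)}\right)^j,$$ and $$\mathbb E\left[\log\det R\right]=\sum_{j=1}^{N-1}j\left(\Psi\left(a+\frac{j+1}{2}\right)-\Psi\left(a+1+\frac j2\right)\right).$$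
   Context: $B(x,y)=\Gamma(x)\Gamma(y)/\Gamma(x+y)$ is the Euler beta function and $\Psi=\Gamma'/\Gamma$ is the digamma function. *)

theory Defs
  imports "HOL-Analysis.Analysis"
begin

definition corr_idx :: "nat \<Rightarrow> (nat \<times> nat) set" where
  "corr_idx N = {(j, k). k < j \<and> j < N}"

definition corr_lebesgue :: "nat \<Rightarrow> (nat \<times> nat \<Rightarrow> real) measure" where
  "corr_lebesgue N = PiM (corr_idx N) (\<lambda>_. lborel)"

definition corr_mat :: "(nat \<times> nat \<Rightarrow> real) \<Rightarrow> nat \<Rightarrow> nat \<Rightarrow> real" where
  "corr_mat \<rho> i j = (if i = j then 1 else if j < i then \<rho> (i, j) else \<rho> (j, i))"

definition det_nat :: "nat \<Rightarrow> (nat \<Rightarrow> nat \<Rightarrow> real) \<Rightarrow> real" where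
  "det_nat N A = (\<Sum>p | p permutes {..<N}. of_int (sign p) * (\<Prod>i<N. A i (p i)))"

definition pos_def_nat :: "nat \<Rightarrow> (nat \<Rightarrow> nat \<Rightarrow> real) \<Rightarrow> bool" where
  "pos_def_nat N A = (\<forall>x :: nat \<Rightarrow> real. (\<exists>i<N. x i \<noteq> 0) \<longrightarrow>
      (\<Sum>i<N. \<Sum>j<N. x i * A i j * x j) > 0)"

definition corr_set :: "nat \<Rightarrow> (nat \<times> nat \<Rightarrow> real) set" where
  "corr_set N = {\<rho> \<in> space (corr_lebesgue N). pos_def_nat N (corr_mat \<rho>)}"

definition corr_det :: "nat \<Rightarrow> (nat \<times> nat \<Rightarrow> real) \<Rightarrow> real" where
  "corr_det N \<rho> = det_nat N (corr_mat \<rho>)"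

definition corr_const :: "nat \<Rightarrow> real \<Rightarrow> real" where
  "corr_const N a = (LINT \<rho>:corr_set N|corr_lebesgue N. corr_det N \<rho> powr a)"

end

theory Submission
  imports Defs "Jordan_Normal_Form.Determinant"
begin

definition skip :: "nat \<Rightarrow> nat \<Rightarrow> nat" where
  "skip k i = (if i < k then i else Suc i)"

definition elim :: "nat \<Rightarrow> (nat \<Rightarrow> nat \<Rightarrow> real) \<Rightarrow> nat \<Rightarrow> nat \<Rightarrow> real" where
  "elim k A i j = A (skip k i) (skip k j) - A (skip k i) k * A k (skip k j) / A k k"

definition toM :: "nat \<Rightarrow> (nat \<Rightarrow> nat \<Rightarrow> real) \<Rightarrow> real mat" where
  "toM n A = mat n n (\<lambda>(i,j). A i j)"

lemma toM_carrier[simp]: "toM n A \<in> carrier_mat n n"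
  by (simp add: toM_def)

lemma det_nat_toM: "det_nat n A = det (toM n A)"
  unfolding det_nat_def det_def'[OF toM_carrier]
  by (intro sum.cong) (auto simp: toM_def atLeast0LessThan intro!: prod.cong arg_cong2[where f="(*)"]
      dest: permutes_in_image)

lemma det_elim:
  assumes k: "k < Suc n" and Akk: "A k k \<noteq> 0"
  shows "det_nat (Suc n) A = A k k * det_nat n (elim k A)"
proof -
  define C where "C = mat (Suc n) (Suc n) (\<lambda>(i,j). if i = j then 1 else if j = k then - A i k / A k k else (0::real))"
  have C: "C \<in> carrier_mat (Suc n) (Suc n)" by (simp add: C_def)
  have "det C = (\<Sum>j<Suc n. C $$ (k,j) * cofactor C k j)"
    by (rule laplace_expansion_row[OF C k])
  also have "\<dots> = (\<Sum>j<Suc n. (if j = k then cofactor C k k else 0))"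
    by (intro sum.cong) (auto simp: C_def k)
  also have "\<dots> = cofactor C k k" using k by simp
  also have "mat_delete C k k = 1\<^sub>m n"
    by (rule eq_matI) (auto simp: mat_delete_def C_def)
  hence "cofactor C k k = 1" by (simp add: cofactor_def)
  finally have detC: "det C = 1" .
  define B where "B = C * toM (Suc n) A"
  have B: "B \<in> carrier_mat (Suc n) (Suc n)" using C by (simp add: B_def)
  have Bij: "B $$ (i,j) = (if i = k then A i j else A i j - A i k * A k j / A k k)"
    if "i < Suc n" "j < Suc n" for i j
  proof -
    have "B $$ (i,j) = (\<Sum>l \<in> {0..<Suc n}. C $$ (i,l) * A l j)"
      using that C by (simp add: B_def scalar_prod_def toM_def)
    also have "\<dots> = (\<Sum>l \<in> {0..<Suc n}. (if l = i then A l j else 0) + (if l = k \<and> i \<noteq> k then - A i k / A k k * A l j else 0))"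
      using that by (intro sum.cong) (auto simp: C_def)
    also have "\<dots> = (if i = k then A i j else A i j - A i k * A k j / A k k)"
      using that k by (simp add: sum.distrib)
    finally show ?thesis .
  qed
  have "det B = det C * det (toM (Suc n) A)"
    unfolding B_def by (rule det_mult[OF C toM_carrier])
  hence detB: "det B = det_nat (Suc n) A" using detC by (simp add: det_nat_toM)
  have "det B = (\<Sum>i<Suc n. B $$ (i,k) * cofactor B i k)"
    by (rule laplace_expansion_column[OF B k])
  also have "\<dots> = (\<Sum>i<Suc n. (if i = k then A k k * cofactor B k k else 0))"
    by (intro sum.cong) (auto simp: Bij k Akk)
  also have "\<dots> = A k k * cofactor B k k" using k by simp
  also have "mat_delete B k k = toM n (elim k A)"
    using B by (intro eq_matI) (auto simp: mat_delete_def toM_def elim_def skip_def Bij k)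
  hence "cofactor B k k = det_nat n (elim k A)" by (simp add: cofactor_def det_nat_toM)
  finally show ?thesis using detB by simp
qed

definition symm :: "nat \<Rightarrow> (nat \<Rightarrow> nat \<Rightarrow> real) \<Rightarrow> bool" where
  "symm n A = (\<forall>i<n. \<forall>j<n. A i j = A j i)"

definition Qf :: "nat \<Rightarrow> (nat \<Rightarrow> nat \<Rightarrow> real) \<Rightarrow> (nat \<Rightarrow> real) \<Rightarrow> real" where
  "Qf n A x = (\<Sum>i<n. \<Sum>j<n. x i * A i j * x j)"

lemma skip_inj: "inj (skip k)"
  by (auto simp: inj_def skip_def split: if_splits)

lemma skip_image: "k < Suc n \<Longrightarrow> {..<Suc n} = insert k (skip k ` {..<n})"
proof (intro equalityI subsetI)
  fix a assume "k < Suc n" "a \<in> {..<Suc n}"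
  show "a \<in> insert k (skip k ` {..<n})"
  proof (cases "a < k")
    case True
    hence "a = skip k a" "a < n" using \<open>k < Suc n\<close> by (auto simp: skip_def)
    thus ?thesis by blast
  next
    case False
    show ?thesis
    proof (cases "a = k")
      case False
      hence "a = skip k (a - 1)" "a - 1 < n" using \<open>\<not> a < k\<close> \<open>a \<in> {..<Suc n}\<close> by (auto simp: skip_def)
      thus ?thesis by blast
    qed simp
  qed
qed (auto simp: skip_def)

lemma skip_ne: "skip k i \<noteq> k"
  by (auto simp: skip_def)

lemma skip_lt: "i < n \<Longrightarrow> skip k i < Suc n"
  by (auto simp: skip_def)

lemma sum_skip:
  assumes "k < Suc n"
  shows "(\<Sum>a<Suc n. f a) = f k + (\<Sum>i<n. f (skip k i))"
proof -
  have "(\<Sum>a<Suc n. f a) = (\<Sum>a\<in>insert k (skip k ` {..<n}). f a)"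
    using skip_image[OF assms] by simp
  also have "\<dots> = f k + (\<Sum>a\<in>skip k ` {..<n}. f a)"
    by (rule sum.insert) (auto simp: skip_ne dest: sym)
  also have "(\<Sum>a\<in>skip k ` {..<n}. f a) = (\<Sum>i<n. f (skip k i))"
    by (rule sum.reindex_cong[OF inj_on_subset[OF skip_inj]]) auto
  finally show ?thesis .
qed

lemma Qf_elim:
  fixes z :: "nat \<Rightarrow> real"
  assumes k: "k < Suc n" and S: "symm (Suc n) A" and Akk: "A k k \<noteq> 0"
  defines "L \<equiv> (\<Sum>i<n. A k (skip k i) * z (skip k i))"
  shows "Qf (Suc n) A z = A k k * (z k + L / A k k)^2 + Qf n (elim k A) (\<lambda>i. z (skip k i))"
proof -
  have sy: "A (skip k i) k = A k (skip k i)" if "i < n" for i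
    using S k skip_lt[OF that] unfolding symm_def by auto
  have e1: "Qf (Suc n) A z = z k * A k k * z k + (\<Sum>j<n. z k * A k (skip k j) * z (skip k j))
     + ((\<Sum>i<n. z (skip k i) * A (skip k i) k * z k) +
       (\<Sum>i<n. \<Sum>j<n. z (skip k i) * A (skip k i) (skip k j) * z (skip k j)))"
    unfolding Qf_def sum_skip[OF k] sum.distrib by simp
  have e2: "(\<Sum>i<n. z (skip k i) * A (skip k i) k * z k) = z k * L"
    unfolding L_def by (auto simp: sum_distrib_left sy intro!: sum.cong)
  have e3: "(\<Sum>j<n. z k * A k (skip k j) * z (skip k j)) = z k * L"
    unfolding L_def by (auto simp: sum_distrib_left intro!: sum.cong)
  have e4: "Qf n (elim k A) (\<lambda>i. z (skip k i)) =
     (\<Sum>i<n. \<Sum>j<n. z (skip k i) * A (skip k i) (skip k j) * z (skip k j)) - L * L / A k k"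
  proof -
    have "L * L / A k k = (\<Sum>i<n. \<Sum>j<n. z (skip k i) * (A (skip k i) k * A k (skip k j) / A k k) * z (skip k j))"
      unfolding L_def sum_product sum_divide_distrib
      by (intro sum.cong refl) (simp add: sy)
    moreover have "Qf n (elim k A) (\<lambda>i. z (skip k i)) =
     (\<Sum>i<n. \<Sum>j<n. z (skip k i) * A (skip k i) (skip k j) * z (skip k j) -
        z (skip k i) * (A (skip k i) k * A k (skip k j) / A k k) * z (skip k j))"
      unfolding Qf_def elim_def by (intro sum.cong refl) (simp add: right_diff_distrib left_diff_distrib)
    ultimately show ?thesis by (simp add: sum_subtractf)
  qed
  have e5: "A k k * (z k + L / A k k)^2 = z k * A k k * z k + 2 * (z k * L) + L * L / A k k"
    using Akk by (simp add: power2_eq_square field_simps)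
  show ?thesis unfolding e1 e2 e3 e4 e5 by simp
qed

lemma pd_Qf: "pos_def_nat n A = (\<forall>x. (\<exists>i<n. x i \<noteq> 0) \<longrightarrow> Qf n A x > 0)"
  by (simp add: pos_def_nat_def Qf_def)

lemma skip_skip_surj: "k < Suc n \<Longrightarrow> a < Suc n \<Longrightarrow> a \<noteq> k \<Longrightarrow> \<exists>i<n. a = skip k i"
  using skip_image[of k n] by auto

lemma Qf_zero: "(\<And>i. i < n \<Longrightarrow> x i = 0) \<Longrightarrow> Qf n A x = 0"
  by (simp add: Qf_def)

lemma pd_elim:
  assumes k: "k < Suc n" and S: "symm (Suc n) A"
  shows "pos_def_nat (Suc n) A \<longleftrightarrow> A k k > 0 \<and> pos_def_nat n (elim k A)"
proof
  assume pd: "pos_def_nat (Suc n) A"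
  define e where "e = (\<lambda>i. if i = k then 1 else (0::real))"
  have "Qf (Suc n) A e > 0" using pd k unfolding pd_Qf by (auto simp: e_def)
  moreover have "Qf (Suc n) A e = A k k"
  proof -
    have "Qf (Suc n) A e = (\<Sum>i<Suc n. \<Sum>j<Suc n. if i = k \<and> j = k then A k k else 0)"
      unfolding Qf_def by (intro sum.cong refl) (auto simp: e_def)
    also have "\<dots> = (\<Sum>i<Suc n. if i = k then A k k else 0)"
      by (intro sum.cong refl) (simp add: sum.delta k)
    also have "\<dots> = A k k" using k by (simp add: sum.delta)
    finally show ?thesis .
  qed
  ultimately have Akk: "A k k > 0" by simp
  have "Qf n (elim k A) y > 0" if y: "\<exists>i<n. y i \<noteq> 0" for y
  proof -
    define L where "L = (\<Sum>i<n. A k (skip k i) * y i)"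
    define z where "z = (\<lambda>a. if a = k then - L / A k k else if a < k then y a else y (a - 1))"
    have zs: "z (skip k i) = y i" for i by (auto simp: z_def skip_def)
    have zk: "z k = - L / A k k" by (simp add: z_def)
    have "Qf (Suc n) A z = A k k * (z k + (\<Sum>i<n. A k (skip k i) * z (skip k i)) / A k k)^2
       + Qf n (elim k A) (\<lambda>i. z (skip k i))"
      by (rule Qf_elim[OF k S]) (use Akk in simp)
    also have "\<dots> = Qf n (elim k A) y"
      by (simp add: zs zk L_def[symmetric])
    finally have eq: "Qf (Suc n) A z = Qf n (elim k A) y" .
    from y obtain i where i: "i < n" "y i \<noteq> 0" by auto
    have "\<exists>a<Suc n. z a \<noteq> 0"
      by (rule exI[of _ "skip k i"]) (simp add: zs i skip_lt)
    with pd have "Qf (Suc n) A z > 0" unfolding pd_Qf by (elim allE[of _ z]) simp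
    with eq show ?thesis by simp
  qed
  with Akk show "A k k > 0 \<and> pos_def_nat n (elim k A)" unfolding pd_Qf by simp
next
  assume H: "A k k > 0 \<and> pos_def_nat n (elim k A)"
  hence Akk: "A k k > 0" and pd': "pos_def_nat n (elim k A)" by auto
  show "pos_def_nat (Suc n) A" unfolding pd_Qf
  proof (intro allI impI)
    fix z :: "nat \<Rightarrow> real" assume "\<exists>a<Suc n. z a \<noteq> 0"
    then obtain a where a: "a < Suc n" "z a \<noteq> 0" by auto
    define L where "L = (\<Sum>i<n. A k (skip k i) * z (skip k i))"
    have eq: "Qf (Suc n) A z = A k k * (z k + L / A k k)^2 + Qf n (elim k A) (\<lambda>i. z (skip k i))"
      unfolding L_def by (rule Qf_elim[OF k S]) (use Akk in simp)
    show "Qf (Suc n) A z > 0"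
    proof (cases "\<exists>i<n. z (skip k i) \<noteq> 0")
      case True
      have "Qf n (elim k A) (\<lambda>i. z (skip k i)) > 0"
        using pd' True unfolding pd_Qf by (elim allE[of _ "\<lambda>i. z (skip k i)"]) simp
      moreover have "A k k * (z k + L / A k k)^2 \<ge> 0" using Akk by simp
      ultimately show ?thesis using eq by linarith
    next
      case False
      hence z0: "\<And>i. i < n \<Longrightarrow> z (skip k i) = 0" by auto
      have "L = 0" unfolding L_def by (intro sum.neutral) (simp add: z0)
      moreover have "Qf n (elim k A) (\<lambda>i. z (skip k i)) = 0" by (rule Qf_zero) (simp add: z0)
      moreover have "z k \<noteq> 0"
      proof
        assume "z k = 0"
        with a have "a \<noteq> k" by auto
        with skip_skip_surj[OF k a(1)] obtain i where "i < n" "a = skip k i" by auto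
        with z0 a show False by auto
      qed
      ultimately have "Qf (Suc n) A z = A k k * (z k)^2" using eq by simp
      moreover have "A k k * (z k)^2 > 0" using Akk \<open>z k \<noteq> 0\<close> by simp
      ultimately show ?thesis by simp
    qed
  qed
qed

lemma symm_elim:
  assumes k: "k < Suc n" and S: "symm (Suc n) A"
  shows "symm n (elim k A)"
  unfolding symm_def
proof (intro allI impI)
  fix i j assume i: "i < n" and j: "j < n"
  have "A (skip k i) (skip k j) = A (skip k j) (skip k i)" "A (skip k i) k = A k (skip k i)"
    "A (skip k j) k = A k (skip k j)"
    using S skip_lt[OF i, of k] skip_lt[OF j, of k] k unfolding symm_def by auto
  thus "elim k A i j = elim k A j i" unfolding elim_def by simp
qed

lemma det_nat_0: "det_nat 0 A = 1"
  by (simp add: det_nat_def)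

lemma pd_det_pos: "symm n A \<Longrightarrow> pos_def_nat n A \<Longrightarrow> det_nat n A > 0"
proof (induction n arbitrary: A)
  case 0
  then show ?case by (simp add: det_nat_0)
next
  case (Suc n)
  have k: "n < Suc n" by simp
  from pd_elim[OF k Suc.prems(1)] Suc.prems(2) have "A n n > 0" "pos_def_nat n (elim n A)" by auto
  moreover have "det_nat n (elim n A) > 0"
    using Suc.IH[OF symm_elim[OF k Suc.prems(1)]] calculation by auto
  ultimately show ?case by (simp add: det_elim[OF k])
qed

lemma pd_sub: "pos_def_nat (Suc n) A \<Longrightarrow> pos_def_nat n A"
  unfolding pos_def_nat_def
proof (intro allI impI)
  fix x :: "nat \<Rightarrow> real"
  assume H: "\<forall>x. (\<exists>i<Suc n. x i \<noteq> 0) \<longrightarrow> 0 < (\<Sum>i<Suc n. \<Sum>j<Suc n. x i * A i j * x j)"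
    and x: "\<exists>i<n. x i \<noteq> 0"
  define y where "y = x(n := 0)"
  have "\<exists>i<Suc n. y i \<noteq> 0" using x by (auto simp: y_def)
  with H have "0 < (\<Sum>i<Suc n. \<Sum>j<Suc n. y i * A i j * y j)" by blast
  also have "(\<Sum>i<Suc n. \<Sum>j<Suc n. y i * A i j * y j) = (\<Sum>i<n. \<Sum>j<n. x i * A i j * x j)"
    by (simp add: y_def)
  finally show "0 < (\<Sum>i<n. \<Sum>j<n. x i * A i j * x j)" .
qed

lemma det_cong: "(\<And>i j. i < n \<Longrightarrow> j < n \<Longrightarrow> A i j = B i j) \<Longrightarrow> det_nat n A = det_nat n B"
  unfolding det_nat_def
  by (intro sum.cong refl arg_cong2[where f="(*)"] prod.cong) (auto dest: permutes_in_image)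

lemma pd_cong: "(\<And>i j. i < n \<Longrightarrow> j < n \<Longrightarrow> A i j = B i j) \<Longrightarrow> pos_def_nat n A = pos_def_nat n B"
  unfolding pos_def_nat_def by simp

lemma beta_aux_integral:
  fixes \<beta> :: real
  assumes \<beta>: "\<beta> > -1"
  shows "(\<integral>\<^sup>+x. ennreal (indicator {-1..1} x * (1 - x\<^sup>2) powr \<beta>) \<partial>lborel) =
      ennreal (Beta (1 / 2) (\<beta> + 1))"
proof -
  have "((\<lambda>t. t powr (-1 / 2) * (1 - t) powr \<beta>) has_integral
          Beta (1 / 2) (\<beta> + 1)) {0..1}"
    using has_integral_Beta_real[of "1/2" "\<beta> + 1"] \<beta> by simp
  from nn_integral_has_integral_lebesgue[OF _ this] have
     "ennreal (Beta (1 / 2) (\<beta> + 1)) =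
        nn_integral lborel (\<lambda>t. ennreal (t powr (-1 / 2) * (1 - t) powr \<beta> *
                                indicator {0^2..1^2} t))"
    by (simp add: mult_ac ennreal_mult' ennreal_indicator)
  also have "\<dots> = (\<integral>\<^sup>+ x. ennreal (x\<^sup>2 powr - (1 / 2) * (1 - x\<^sup>2) powr \<beta> * (2 * x) *
                          indicator {0..1} x) \<partial>lborel)"
    by (subst nn_integral_substitution[where g = "\<lambda>x. x ^ 2" and g' = "\<lambda>x. 2 * x"])
       (auto intro!: derivative_eq_intros continuous_intros simp: set_borel_measurable_def)
  also have "\<dots> = (\<integral>\<^sup>+ x. 2 * ennreal ((1 - x\<^sup>2) powr \<beta> * indicator {0..1} x) \<partial>lborel)"
    by (intro nn_integral_cong_AE AE_I[of _ _ "{0}"])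
       (auto simp: indicator_def powr_minus powr_half_sqrt field_split_simps ennreal_mult')
  also have "\<dots> = (\<integral>\<^sup>+ x. ennreal ((1 - x\<^sup>2) powr \<beta> * indicator {0..1} x) \<partial>lborel) +
                    (\<integral>\<^sup>+ x. ennreal ((1 - x\<^sup>2) powr \<beta> * indicator {0..1} x) \<partial>lborel)"
    (is "_ = ?I + _") by (simp add: mult_2 nn_integral_add)
  also have "?I = (\<integral>\<^sup>+ x. ennreal ((1 - x\<^sup>2) powr \<beta> * indicator {-1..0} x) \<partial>lborel)"
    by (subst nn_integral_real_affine[of _ "-1" 0])
       (auto simp: indicator_def intro!: nn_integral_cong)
  hence "?I + ?I = \<dots> + ?I" by simp
  also have "\<dots> = (\<integral>\<^sup>+ x. ennreal ((1 - x\<^sup>2) powr \<beta> *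
                    (indicator {-1..0} x + indicator{0..1} x)) \<partial>lborel)"
    by (subst nn_integral_add [symmetric]) (auto simp: algebra_simps)
  also have "\<dots> = (\<integral>\<^sup>+ x. ennreal ((1 - x\<^sup>2) powr \<beta> * indicator {-1..1} x) \<partial>lborel)"
    by (intro nn_integral_cong_AE AE_I[of _ _ "{0}"]) (auto simp: indicator_def)
  also have "\<dots> = (\<integral>\<^sup>+ x. ennreal (indicator {-1..1} x * (1 - x\<^sup>2) powr \<beta>) \<partial>lborel)"
    by (simp add: mult.commute)
  finally show ?thesis ..
qed

lemma beta_scaled_integral:
  fixes \<beta> c d :: real
  assumes \<beta>: "\<beta> > -1" and c: "c > 0" and d: "d > 0"
  shows "(\<integral>\<^sup>+y. ennreal (indicator {y. c - y\<^sup>2 / d > 0} y * (c - y\<^sup>2 / d) powr \<beta>) \<partial>lborel) =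
      ennreal (sqrt (c * d) * c powr \<beta> * Beta (1 / 2) (\<beta> + 1))"
proof -
  define \<sigma> where "\<sigma> = sqrt (c * d)"
  have \<sigma>: "\<sigma> > 0" using c d by (simp add: \<sigma>_def)
  have \<sigma>2: "\<sigma>^2 = c * d" using c d by (simp add: \<sigma>_def)
  have "(\<integral>\<^sup>+y. ennreal (indicator {y. c - y\<^sup>2 / d > 0} y * (c - y\<^sup>2 / d) powr \<beta>) \<partial>lborel)
     = \<bar>\<sigma>\<bar> * (\<integral>\<^sup>+x. ennreal (indicator {y. c - y\<^sup>2 / d > 0} (0 + \<sigma> * x) * (c - (0 + \<sigma> * x)\<^sup>2 / d) powr \<beta>) \<partial>lborel)"
    by (rule nn_integral_real_affine) (use \<sigma> in auto)
  also have "(\<lambda>x. ennreal (indicator {y. c - y\<^sup>2 / d > 0} (0 + \<sigma> * x) * (c - (0 + \<sigma> * x)\<^sup>2 / d) powr \<beta>))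
      = (\<lambda>x. ennreal (c powr \<beta>) * ennreal (indicator {-1..1} x * (1 - x\<^sup>2) powr \<beta>))"
  proof
    fix x :: real
    have e: "c - (0 + \<sigma> * x)\<^sup>2 / d = c * (1 - x\<^sup>2)"
      using d by (simp add: power_mult_distrib \<sigma>2 field_simps)
    have e': "c - (\<sigma> * x)\<^sup>2 / d = c * (1 - x\<^sup>2)" using e by simp
    have P: "(\<sigma> * x)\<^sup>2 / d < c \<longleftrightarrow> x\<^sup>2 < 1"
    proof -
      have "(\<sigma> * x)\<^sup>2 / d < c \<longleftrightarrow> 0 < c * (1 - x\<^sup>2)" using e' by linarith
      also have "\<dots> \<longleftrightarrow> x\<^sup>2 < 1" using c by (simp add: zero_less_mult_iff)
      finally show ?thesis .
    qed
    have I: "x \<in> {-1..1} \<longleftrightarrow> x\<^sup>2 \<le> 1" by (auto simp: abs_square_le_1)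
    consider "x\<^sup>2 < 1" | "x\<^sup>2 = 1" | "x\<^sup>2 > 1" by linarith
    thus "ennreal (indicator {y. c - y\<^sup>2 / d > 0} (0 + \<sigma> * x) * (c - (0 + \<sigma> * x)\<^sup>2 / d) powr \<beta>)
      = ennreal (c powr \<beta>) * ennreal (indicator {-1..1} x * (1 - x\<^sup>2) powr \<beta>)"
    proof cases
      case 1
      thus ?thesis using c P I by (simp add: indicator_def e' powr_mult ennreal_mult'[symmetric])
    next
      case 2
      thus ?thesis using c P I by (simp add: indicator_def)
    next
      case 3
      thus ?thesis using c P I by (simp add: indicator_def)
    qed
  qed
  also have "(\<integral>\<^sup>+x. ennreal (c powr \<beta>) * ennreal (indicator {-1..1} x * (1 - x\<^sup>2) powr \<beta>) \<partial>lborel)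
     = ennreal (c powr \<beta>) * ennreal (Beta (1 / 2) (\<beta> + 1))"
    by (subst nn_integral_cmult) (auto simp: beta_aux_integral[OF \<beta>])
  finally show ?thesis using \<sigma> c \<beta>
    by (simp add: \<sigma>_def ennreal_mult'[symmetric] mult.assoc)
qed

lemma PiM_translate:
  fixes I :: "'i set"
  assumes "finite I"
  shows "\<And>f v. f \<in> borel_measurable (PiM I (\<lambda>_. lborel :: real measure)) \<Longrightarrow>
    (\<integral>\<^sup>+x. f (\<lambda>i\<in>I. x i + v i) \<partial>PiM I (\<lambda>_. lborel)) = (\<integral>\<^sup>+x. f x \<partial>PiM I (\<lambda>_. lborel))"
  using assms
proof (induction I rule: finite_induct)
  case empty
  then show ?case by (simp add: PiM_empty nn_integral_count_space_finite restrict_def)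
next
  case (insert i I f v)
  interpret product_sigma_finite "\<lambda>_. lborel :: real measure" by standard
  note f[measurable] = insert.prems
  define TI where "TI = (\<lambda>x. \<lambda>j\<in>I. x j + v j)"
  define G where "G = (\<lambda>z. \<integral>\<^sup>+y. f (z(i := y)) \<partial>lborel)"
  have TI_meas[measurable]: "TI \<in> measurable (PiM I (\<lambda>_. lborel)) (PiM I (\<lambda>_. lborel))"
    unfolding TI_def by measurable
  have G_meas[measurable]: "G \<in> borel_measurable (PiM I (\<lambda>_. lborel))"
    unfolding G_def by measurable
  have T_meas: "(\<lambda>x. f (\<lambda>j\<in>insert i I. x j + v j)) \<in> borel_measurable (PiM (insert i I) (\<lambda>_. lborel))"
    by measurable
  have "(\<integral>\<^sup>+x. f (\<lambda>j\<in>insert i I. x j + v j) \<partial>PiM (insert i I) (\<lambda>_. lborel))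
      = (\<integral>\<^sup>+x. (\<integral>\<^sup>+y. f (\<lambda>j\<in>insert i I. (x(i := y)) j + v j) \<partial>lborel) \<partial>PiM I (\<lambda>_. lborel))"
    by (rule product_nn_integral_insert[OF insert.hyps(1,2) T_meas])
  also have "\<dots> = (\<integral>\<^sup>+x. (\<integral>\<^sup>+y. f ((TI x)(i := v i + 1 * y)) \<partial>lborel) \<partial>PiM I (\<lambda>_. lborel))"
    using insert.hyps(2)
    by (intro nn_integral_cong arg_cong[where f=f]) (auto simp: TI_def fun_eq_iff)
  also have "\<dots> = (\<integral>\<^sup>+x. G (TI x) \<partial>PiM I (\<lambda>_. lborel))"
  proof (intro nn_integral_cong)
    fix x assume x: "x \<in> space (PiM I (\<lambda>_. lborel :: real measure))"
    have xs: "TI x \<in> space (PiM I (\<lambda>_. lborel :: real measure))"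
      using measurable_space[OF TI_meas x] .
    have m: "(\<lambda>y. f ((TI x)(i := y))) \<in> borel_measurable lborel"
      using measurable_comp[OF measurable_component_update[OF xs insert.hyps(2)] f]
      by (simp add: comp_def)
    show "(\<integral>\<^sup>+y. f ((TI x)(i := v i + 1 * y)) \<partial>lborel) = G (TI x)"
      unfolding G_def
      by (subst nn_integral_real_affine[of _ 1 "v i"]) (use m in \<open>auto simp: measurable_lborel1\<close>)
  qed
  also have "\<dots> = (\<integral>\<^sup>+x. G x \<partial>PiM I (\<lambda>_. lborel))"
    using insert.IH[OF G_meas, of v] unfolding TI_def .
  also have "\<dots> = (\<integral>\<^sup>+x. f x \<partial>PiM (insert i I) (\<lambda>_. lborel))"
    unfolding G_def by (rule product_nn_integral_insert[symmetric, OF insert.hyps(1,2) f])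
  finally show ?case .
qed

definition bord :: "nat \<Rightarrow> (nat \<Rightarrow> nat \<Rightarrow> real) \<Rightarrow> (nat \<Rightarrow> real) \<Rightarrow> real \<Rightarrow> nat \<Rightarrow> nat \<Rightarrow> real" where
  "bord n M r c i j = (if i < n \<and> j < n then M i j else if i < n then r i else if j < n then r j else c)"

definition Gf :: "nat \<Rightarrow> (nat \<Rightarrow> nat \<Rightarrow> real) \<Rightarrow> real \<Rightarrow> real \<Rightarrow> (nat \<Rightarrow> real) \<Rightarrow> ennreal" where
  "Gf m M c b r = (if pos_def_nat (Suc m) (bord m M r c) then ennreal (det_nat (Suc m) (bord m M r c) powr b) else 0)"

definition Kc :: "nat \<Rightarrow> real \<Rightarrow> real" where
  "Kc m b = (\<Prod>j=1..m. Beta (1/2) (b + (real j + 1) / 2))"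

lemma pd_0: "pos_def_nat 0 A"
  by (simp add: pos_def_nat_def)

lemma symm_bord: "symm m M \<Longrightarrow> symm (Suc m) (bord m M r c)"
  by (auto simp: symm_def bord_def)

lemma elim_bord:
  assumes S: "symm (Suc m) M" and i: "i < Suc m" and j: "j < Suc m"
  shows "elim m (bord (Suc m) M r c) i j =
     bord m (elim m M) (\<lambda>k. r k - M k m * r m / M m m) (c - r m * r m / M m m) i j"
proof -
  have Mjm: "M m j = M j m" if "j < m" for j using S that unfolding symm_def by auto
  show ?thesis using i j
    by (cases "i < m"; cases "j < m") (auto simp: elim_def bord_def skip_def Mjm)
qed

lemma Gf_cong_r: "(\<And>k. k < m \<Longrightarrow> r k = r2 k) \<Longrightarrow> Gf m M c b r = Gf m M c b r2"
proof -
  assume H: "\<And>k. k < m \<Longrightarrow> r k = r2 k"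
  have e: "bord m M r c i j = bord m M r2 c i j" if "i < Suc m" "j < Suc m" for i j
    using that H by (auto simp: bord_def)
  show ?thesis unfolding Gf_def using det_cong[of "Suc m" "bord m M r c" "bord m M r2 c"]
      pd_cong[of "Suc m" "bord m M r c" "bord m M r2 c"] e by simp
qed

lemma Gf_cong: "c = c2 \<Longrightarrow> (\<And>k. k < m \<Longrightarrow> r k = r2 k) \<Longrightarrow> Gf m M c b r = Gf m M c2 b r2"
  using Gf_cong_r by blast

lemma Kc_pos:
  assumes b: "b > -1" shows "Kc m b > 0"
  unfolding Kc_def
proof (intro prod_pos)
  fix j assume j: "j \<in> {1..m}"
  have "real j \<ge> 1" using j by auto
  hence "(real j + 1) / 2 \<ge> 1" by simp
  hence "b + (real j + 1) / 2 > 0" using b by linarith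
  thus "Beta (1/2) (b + (real j + 1) / 2) > 0"
    by (simp add: Beta_def)
qed

lemma Kc_Suc: "Kc (Suc m) b = Kc m b * Beta (1/2) (b + real m / 2 + 1)"
  unfolding Kc_def by (simp add: prod.nat_ivl_Suc' field_simps)

lemma det_meas:
  assumes "\<And>i j. i < n \<Longrightarrow> j < n \<Longrightarrow> (\<lambda>y. A y i j) \<in> borel_measurable M"
  shows "(\<lambda>y. det_nat n (A y)) \<in> borel_measurable M"
  unfolding det_nat_def
  by (intro borel_measurable_sum borel_measurable_times borel_measurable_prod borel_measurable_const
      assms) (auto dest: permutes_in_image)

lemma pd_meas:
  shows "\<And>A. (\<And>y. symm n (A y)) \<Longrightarrow> (\<And>i j. i < n \<Longrightarrow> j < n \<Longrightarrow> (\<lambda>y. A y i j) \<in> borel_measurable M)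
     \<Longrightarrow> {y \<in> space M. pos_def_nat n (A y)} \<in> sets M"
proof (induction n)
  case 0
  then show ?case by (simp add: pd_0)
next
  case (Suc n A)
  have k: "n < Suc n" by simp
  have "{y \<in> space M. pos_def_nat (Suc n) (A y)} =
      {y \<in> space M. A y n n > 0} \<inter> {y \<in> space M. pos_def_nat n (elim n (A y))}"
    using pd_elim[OF k Suc.prems(1)] by blast
  also have "\<dots> \<in> sets M"
  proof (intro sets.Int)
    show "{y \<in> space M. A y n n > 0} \<in> sets M"
      using Suc.prems(2)[OF k k] by measurable
    show "{y \<in> space M. pos_def_nat n (elim n (A y))} \<in> sets M"
    proof (rule Suc.IH)
      show "symm n (elim n (A y))" for y by (rule symm_elim[OF k Suc.prems(1)])
      fix i j assume i: "i < n" and j: "j < n"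
      have [measurable]: "(\<lambda>y. A y (skip n i) (skip n j)) \<in> borel_measurable M"
          "(\<lambda>y. A y (skip n i) n) \<in> borel_measurable M"
          "(\<lambda>y. A y n (skip n j)) \<in> borel_measurable M"
          "(\<lambda>y. A y n n) \<in> borel_measurable M"
        using Suc.prems(2) skip_lt[OF i] skip_lt[OF j] k by auto
      show "(\<lambda>y. elim n (A y) i j) \<in> borel_measurable M"
        unfolding elim_def by measurable
    qed
  qed
  finally show ?case .
qed

lemma bord_entry_meas_sh:
  assumes "i < Suc m" "j < Suc m" "Pair p ` {..<m} \<subseteq> J"
  shows "(\<lambda>y. bord m M (\<lambda>k. y (p, k) - u k) c i j) \<in> borel_measurable (PiM J (\<lambda>_. lborel))"
proof -
  have comp: "(\<lambda>y. y (p, k) - u k) \<in> borel_measurable (PiM J (\<lambda>_. lborel))" if "k < m" for k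
  proof -
    have "(\<lambda>y. y (p, k)) \<in> borel_measurable (PiM J (\<lambda>_. lborel))"
      using assms(3) that by (subst measurable_lborel1[symmetric]) (intro measurable_component_singleton, auto)
    thus ?thesis by (rule borel_measurable_diff) simp
  qed
  show ?thesis
    using assms(1,2) comp[of i] comp[of j] unfolding bord_def
    by (cases "i < m"; cases "j < m") auto
qed

lemma Gf_meas_sh:
  assumes S: "symm m M" and J: "Pair p ` {..<m} \<subseteq> J"
  shows "(\<lambda>y. Gf m M c b (\<lambda>k. y (p, k) - u k)) \<in> borel_measurable (PiM J (\<lambda>_. lborel))"
proof -
  have [measurable]: "{y \<in> space (PiM J (\<lambda>_. lborel)). pos_def_nat (Suc m) (bord m M (\<lambda>k. y (p, k) - u k) c)}
      \<in> sets (PiM J (\<lambda>_. lborel))"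
    by (rule pd_meas) (auto intro: symm_bord[OF S] bord_entry_meas_sh[OF _ _ J])
  have [measurable]: "(\<lambda>y. det_nat (Suc m) (bord m M (\<lambda>k. y (p, k) - u k) c)) \<in> borel_measurable (PiM J (\<lambda>_. lborel))"
    by (rule det_meas) (auto intro: bord_entry_meas_sh[OF _ _ J])
  show ?thesis unfolding Gf_def by measurable
qed



lemma Gf_meas:
  assumes S: "symm m M" and J: "Pair p ` {..<m} \<subseteq> J"
  shows "(\<lambda>y. Gf m M c b (\<lambda>k. y (p, k))) \<in> borel_measurable (PiM J (\<lambda>_. lborel))"
  using Gf_meas_sh[OF S J, of c b "\<lambda>_. 0"] by simp

lemma pd_Mmm: "symm (Suc m) M \<Longrightarrow> pos_def_nat (Suc m) M \<Longrightarrow> M m m > 0"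
  using pd_elim[of m m M] by auto

lemma Gf_step:
  assumes S: "symm (Suc m) M" and P: "pos_def_nat (Suc m) M"
  shows "Gf (Suc m) M c b r = ennreal (M m m powr b) *
     Gf m (elim m M) (c - r m * r m / M m m) b (\<lambda>k. r k - M k m * r m / M m m)"
proof -
  define B where "B = bord (Suc m) M r c"
  define B' where "B' = bord m (elim m M) (\<lambda>k. r k - M k m * r m / M m m) (c - r m * r m / M m m)"
  have Mmm: "M m m > 0" by (rule pd_Mmm[OF S P])
  have SB: "symm (Suc (Suc m)) B" unfolding B_def by (rule symm_bord[OF S])
  have SB': "symm (Suc m) B'" unfolding B'_def by (rule symm_bord[OF symm_elim[OF _ S]]) simp
  have Bmm: "B m m = M m m" by (simp add: B_def bord_def)
  have eqB: "elim m B i j = B' i j" if "i < Suc m" "j < Suc m" for i j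
    unfolding B_def B'_def by (rule elim_bord[OF S that])
  have pdB: "pos_def_nat (Suc (Suc m)) B \<longleftrightarrow> pos_def_nat (Suc m) B'"
    using pd_elim[of m "Suc m" B, OF _ SB] Bmm Mmm pd_cong[of "Suc m" "elim m B" B', OF eqB] by simp
  have detB: "det_nat (Suc (Suc m)) B = M m m * det_nat (Suc m) B'"
    using det_elim[of m "Suc m" B] Bmm Mmm det_cong[of "Suc m" "elim m B" B', OF eqB] by simp
  show ?thesis
  proof (cases "pos_def_nat (Suc m) B'")
    case True
    have "det_nat (Suc m) B' > 0" by (rule pd_det_pos[OF SB' True])
    hence "(M m m * det_nat (Suc m) B') powr b = M m m powr b * det_nat (Suc m) B' powr b"
      using Mmm by (simp add: powr_mult)
    then show ?thesis using True pdB detB unfolding Gf_def B_def[symmetric] B'_def[symmetric]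
      by (simp add: ennreal_mult)
  next
    case False
    then show ?thesis using pdB unfolding Gf_def B_def[symmetric] B'_def[symmetric] by simp
  qed
qed

lemma Pair_image_Suc: "Pair p ` {..<Suc m} = insert (p, m) (Pair p ` {..<m})"
  by (auto simp: lessThan_Suc)

lemma Gf_0: "Gf 0 M c b r = (if c > 0 then ennreal (c powr b) else 0)"
proof -
  have S: "symm (Suc 0) (bord 0 M r c)" by (simp add: symm_def)
  have "pos_def_nat (Suc 0) (bord 0 M r c) \<longleftrightarrow> c > 0"
    using pd_elim[of 0 0 "bord 0 M r c", OF _ S] by (simp add: pd_0 bord_def)
  moreover have "c > 0 \<Longrightarrow> det_nat (Suc 0) (bord 0 M r c) = c"
    using det_elim[of 0 0 "bord 0 M r c"] by (simp add: bord_def det_nat_0)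
  ultimately show ?thesis unfolding Gf_def by simp
qed

lemma row_integral:
  fixes p :: nat and b :: real
  assumes b: "b > -1"
  shows "\<And>M c. symm m M \<Longrightarrow> pos_def_nat m M \<Longrightarrow>
    (\<integral>\<^sup>+y. Gf m M c b (\<lambda>k. y (p, k)) \<partial>PiM (Pair p ` {..<m}) (\<lambda>_. lborel)) =
    ennreal (if c > 0 then det_nat m M powr (b + 1/2) * c powr (b + real m / 2) * Kc m b else 0)"
proof (induction m)
  case 0
  show ?case by (simp add: PiM_empty Gf_0 det_nat_0 Kc_def)
next
  case (Suc m M c)
  interpret product_sigma_finite "\<lambda>_. lborel :: real measure" by standard
  note S = Suc.prems(1) and P = Suc.prems(2)
  define I where "I = Pair p ` {..<m}"
  have finI: "finite I" and notin: "(p, m) \<notin> I" by (auto simp: I_def)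
  have Mmm: "M m m > 0" by (rule pd_Mmm[OF S P])
  define M'' where "M'' = elim m M"
  have S'': "symm m M''" unfolding M''_def by (rule symm_elim[OF _ S]) simp
  have P'': "pos_def_nat m M''" using pd_elim[of m m M, OF _ S] P by (simp add: M''_def)
  define D where "D = det_nat m M''"
  have detM: "det_nat (Suc m) M = M m m * D"
    unfolding D_def M''_def by (rule det_elim) (use Mmm in auto)
  have Dpos: "D > 0" unfolding D_def by (rule pd_det_pos[OF S'' P''])
  define \<beta> where "\<beta> = b + real m / 2"
  have \<beta>: "\<beta> > -1" using b by (simp add: \<beta>_def)
  have meas: "(\<lambda>y. Gf (Suc m) M c b (\<lambda>k. y (p, k))) \<in> borel_measurable (PiM (insert (p, m) I) (\<lambda>_. lborel))"
    by (rule Gf_meas[OF S]) (auto simp: I_def lessThan_Suc)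
  have "(\<integral>\<^sup>+y. Gf (Suc m) M c b (\<lambda>k. y (p, k)) \<partial>PiM (Pair p ` {..<Suc m}) (\<lambda>_. lborel))
     = (\<integral>\<^sup>+t. (\<integral>\<^sup>+x. Gf (Suc m) M c b (\<lambda>k. (x((p, m) := t)) (p, k)) \<partial>PiM I (\<lambda>_. lborel)) \<partial>lborel)"
    unfolding Pair_image_Suc I_def[symmetric]
    by (rule product_nn_integral_insert_rev[OF finI notin meas])
  also have "\<dots> = (\<integral>\<^sup>+t. ennreal (M m m powr b) *
      ennreal (if c - t * t / M m m > 0 then D powr (b + 1/2) * (c - t * t / M m m) powr \<beta> * Kc m b else 0) \<partial>lborel)"
  proof (intro nn_integral_cong)
    fix t :: real
    define w where "w = (\<lambda>k. M k m * t / M m m)"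
    have "(\<integral>\<^sup>+x. Gf (Suc m) M c b (\<lambda>k. (x((p, m) := t)) (p, k)) \<partial>PiM I (\<lambda>_. lborel))
       = (\<integral>\<^sup>+x. ennreal (M m m powr b) * Gf m M'' (c - t * t / M m m) b (\<lambda>k. x (p, k) - w k) \<partial>PiM I (\<lambda>_. lborel))"
    proof (intro nn_integral_cong)
      fix x
      show "Gf (Suc m) M c b (\<lambda>k. (x((p, m) := t)) (p, k)) =
          ennreal (M m m powr b) * Gf m M'' (c - t * t / M m m) b (\<lambda>k. x (p, k) - w k)"
        unfolding Gf_step[OF S P] M''_def w_def
        by (intro arg_cong2[where f="(*)"] Gf_cong) auto
    qed
    also have "\<dots> = ennreal (M m m powr b) * (\<integral>\<^sup>+x. Gf m M'' (c - t * t / M m m) b (\<lambda>k. x (p, k) - w k) \<partial>PiM I (\<lambda>_. lborel))"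
      by (rule nn_integral_cmult) (rule Gf_meas_sh[OF S''], simp add: I_def)
    also have "(\<integral>\<^sup>+x. Gf m M'' (c - t * t / M m m) b (\<lambda>k. x (p, k) - w k) \<partial>PiM I (\<lambda>_. lborel))
       = (\<integral>\<^sup>+x. Gf m M'' (c - t * t / M m m) b (\<lambda>k. (\<lambda>i\<in>I. x i + (- w (snd i))) (p, k)) \<partial>PiM I (\<lambda>_. lborel))"
      by (intro nn_integral_cong Gf_cong_r) (auto simp: I_def)
    also have "\<dots> = (\<integral>\<^sup>+x. Gf m M'' (c - t * t / M m m) b (\<lambda>k. x (p, k)) \<partial>PiM I (\<lambda>_. lborel))"
      using PiM_translate[OF finI, of "\<lambda>y. Gf m M'' (c - t * t / M m m) b (\<lambda>k. y (p, k))" "\<lambda>i. - w (snd i)"]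
        Gf_meas[OF S'', of p I] by (simp add: I_def)
    also have "\<dots> = ennreal (if c - t * t / M m m > 0 then D powr (b + 1/2) * (c - t * t / M m m) powr \<beta> * Kc m b else 0)"
      unfolding I_def D_def \<beta>_def by (rule Suc.IH[OF S'' P''])
    finally show "(\<integral>\<^sup>+x. Gf (Suc m) M c b (\<lambda>k. (x((p, m) := t)) (p, k)) \<partial>PiM I (\<lambda>_. lborel)) =
        ennreal (M m m powr b) * ennreal (if c - t * t / M m m > 0 then D powr (b + 1/2) * (c - t * t / M m m) powr \<beta> * Kc m b else 0)" .
  qed
  also have "\<dots> = (\<integral>\<^sup>+t. ennreal (M m m powr b * D powr (b + 1/2) * Kc m b) *
      ennreal (indicator {t. c - t\<^sup>2 / M m m > 0} t * (c - t\<^sup>2 / M m m) powr \<beta>) \<partial>lborel)"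
    by (intro nn_integral_cong) (auto simp: indicator_def ennreal_mult'[symmetric] power2_eq_square Kc_pos[OF b] Dpos less_imp_le mult_ac)
  also have "\<dots> = ennreal (M m m powr b * D powr (b + 1/2) * Kc m b) *
      (\<integral>\<^sup>+t. ennreal (indicator {t. c - t\<^sup>2 / M m m > 0} t * (c - t\<^sup>2 / M m m) powr \<beta>) \<partial>lborel)"
    by (rule nn_integral_cmult) measurable
  also have "\<dots> = ennreal (if c > 0 then det_nat (Suc m) M powr (b + 1/2) * c powr (b + real (Suc m) / 2) * Kc (Suc m) b else 0)"
  proof (cases "c > 0")
    case True
    have Iv: "(\<integral>\<^sup>+t. ennreal (indicator {t. c - t\<^sup>2 / M m m > 0} t * (c - t\<^sup>2 / M m m) powr \<beta>) \<partial>lborel)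
        = ennreal (sqrt (c * M m m) * c powr \<beta> * Beta (1 / 2) (\<beta> + 1))"
      by (rule beta_scaled_integral[OF \<beta> True Mmm])
    have Ev: "M m m powr b * D powr (b + 1/2) * Kc m b * (sqrt (c * M m m) * c powr \<beta> * Beta (1 / 2) (\<beta> + 1))
        = det_nat (Suc m) M powr (b + 1/2) * c powr (b + real (Suc m) / 2) * Kc (Suc m) b"
    proof -
      have "sqrt (c * M m m) = c powr (1/2) * M m m powr (1/2)"
        using True Mmm by (simp add: real_sqrt_mult powr_half_sqrt)
      moreover have "det_nat (Suc m) M powr (b + 1/2) = M m m powr (b + 1/2) * D powr (b + 1/2)"
        using Mmm Dpos by (simp add: detM powr_mult)
      moreover have "M m m powr (b + 1/2) = M m m powr b * M m m powr (1/2)"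
        by (simp add: powr_add)
      moreover have "c powr (b + real (Suc m) / 2) = c powr \<beta> * c powr (1/2)"
        by (simp add: \<beta>_def powr_add[symmetric] field_simps)
      moreover have "Kc (Suc m) b = Kc m b * Beta (1 / 2) (\<beta> + 1)"
        by (simp add: Kc_Suc \<beta>_def)
      ultimately show ?thesis by (simp add: ac_simps)
    qed
    have "Beta (1 / 2) (\<beta> + 1) > 0" using \<beta> by (simp add: Beta_def)
    hence "ennreal (M m m powr b * D powr (b + 1/2) * Kc m b) * ennreal (sqrt (c * M m m) * c powr \<beta> * Beta (1 / 2) (\<beta> + 1))
      = ennreal (M m m powr b * D powr (b + 1/2) * Kc m b * (sqrt (c * M m m) * c powr \<beta> * Beta (1 / 2) (\<beta> + 1)))"
      using True Mmm Dpos Kc_pos[OF b, of m] by (intro ennreal_mult[symmetric]) (auto intro!: mult_nonneg_nonneg)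
    thus ?thesis unfolding Iv Ev using True by simp
  next
    case False
    have "(\<integral>\<^sup>+t. ennreal (indicator {t. c - t\<^sup>2 / M m m > 0} t * (c - t\<^sup>2 / M m m) powr \<beta>) \<partial>lborel) = 0"
    proof -
      have z: "ennreal (indicator {t. c - t\<^sup>2 / M m m > 0} t * (c - t\<^sup>2 / M m m) powr \<beta>) = 0" for t :: real
      proof -
        have "t\<^sup>2 / M m m \<ge> 0" using Mmm by simp
        hence "\<not> c - t\<^sup>2 / M m m > 0" using False by linarith
        thus ?thesis by simp
      qed
      show ?thesis by (simp only: z) simp
    qed
    thus ?thesis using False by simp
  qed
  finally show ?case .
qed

definition Hf :: "nat \<Rightarrow> real \<Rightarrow> (nat \<times> nat \<Rightarrow> real) \<Rightarrow> ennreal" where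
  "Hf N b \<rho> = (if \<rho> \<in> corr_set N then ennreal (corr_det N \<rho> powr b) else 0)"

definition Gp :: "nat \<Rightarrow> real \<Rightarrow> real" where
  "Gp N b = (\<Prod>j\<in>{1..<N}. Beta (b + (real j + 1) / 2) (1/2) ^ j)"

lemma symm_corr_mat: "symm N (corr_mat \<rho>)"
  by (auto simp: symm_def corr_mat_def)

lemma corr_entry_meas:
  assumes "i < N" "j < N"
  shows "(\<lambda>\<rho>. corr_mat \<rho> i j) \<in> borel_measurable (corr_lebesgue N)"
proof -
  have comp: "(\<lambda>\<rho>. \<rho> (a, b)) \<in> borel_measurable (corr_lebesgue N)" if "b < a" "a < N" for a b
    using that unfolding corr_lebesgue_def
    by (subst measurable_lborel1[symmetric]) (intro measurable_component_singleton, auto simp: corr_idx_def)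
  show ?thesis
    using assms comp[of j i] comp[of i j] unfolding corr_mat_def
    by (cases "i = j"; cases "j < i") auto
qed

lemma corr_set_meas[measurable]: "corr_set N \<in> sets (corr_lebesgue N)"
proof -
  have "corr_set N = {\<rho> \<in> space (corr_lebesgue N). pos_def_nat N (corr_mat \<rho>)}"
    by (simp add: corr_set_def)
  also have "\<dots> \<in> sets (corr_lebesgue N)"
    by (rule pd_meas) (auto intro: symm_corr_mat corr_entry_meas)
  finally show ?thesis .
qed

lemma corr_det_meas[measurable]: "corr_det N \<in> borel_measurable (corr_lebesgue N)"
proof -
  have "(\<lambda>\<rho>. det_nat N (corr_mat \<rho>)) \<in> borel_measurable (corr_lebesgue N)"
    by (rule det_meas) (auto intro: corr_entry_meas)
  thus ?thesis by (simp add: corr_det_def[abs_def])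
qed

lemma Hf_meas[measurable]: "Hf N b \<in> borel_measurable (corr_lebesgue N)"
  unfolding Hf_def[abs_def] by measurable

lemma corr_idx_Suc: "corr_idx (Suc N) = corr_idx N \<union> Pair N ` {..<N}"
  by (auto simp: corr_idx_def less_Suc_eq)

lemma corr_idx_disj: "corr_idx N \<inter> Pair N ` {..<N} = {}"
  by (auto simp: corr_idx_def)

lemma finite_corr_idx: "finite (corr_idx N)"
proof -
  have "corr_idx N \<subseteq> {..<N} \<times> {..<N}" by (auto simp: corr_idx_def)
  thus ?thesis by (rule finite_subset) auto
qed

lemma corr_mat_merge:
  assumes "i < Suc N" "j < Suc N"
  shows "corr_mat (merge (corr_idx N) (Pair N ` {..<N}) (x, y)) i j = bord N (corr_mat x) (\<lambda>k. y (N, k)) 1 i j"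
  using assms by (auto simp: corr_mat_def bord_def merge_def corr_idx_def less_Suc_eq)

lemma pd_bord_sub: "pos_def_nat (Suc N) (bord N R r c) \<Longrightarrow> pos_def_nat N R"
  using pd_sub[of N "bord N R r c"] pd_cong[of N "bord N R r c" R] by (simp add: bord_def)

lemma Hf_merge:
  assumes x: "x \<in> space (corr_lebesgue N)" and y: "y \<in> space (PiM (Pair N ` {..<N}) (\<lambda>_. lborel))"
  shows "Hf (Suc N) b (merge (corr_idx N) (Pair N ` {..<N}) (x, y)) =
    (if x \<in> corr_set N then Gf N (corr_mat x) 1 b (\<lambda>k. y (N, k)) else 0)"
proof -
  let ?m = "merge (corr_idx N) (Pair N ` {..<N}) (x, y)"
  have ms: "?m \<in> space (corr_lebesgue (Suc N))"
    using x y unfolding corr_lebesgue_def corr_idx_Suc by (auto simp: space_PiM)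
  have pd: "pos_def_nat (Suc N) (corr_mat ?m) \<longleftrightarrow> pos_def_nat (Suc N) (bord N (corr_mat x) (\<lambda>k. y (N, k)) 1)"
    by (rule pd_cong) (rule corr_mat_merge)
  have dt: "det_nat (Suc N) (corr_mat ?m) = det_nat (Suc N) (bord N (corr_mat x) (\<lambda>k. y (N, k)) 1)"
    by (rule det_cong) (rule corr_mat_merge)
  show ?thesis
    using ms x pd dt pd_bord_sub[of N "corr_mat x"]
    unfolding Hf_def Gf_def corr_set_def corr_det_def by auto
qed

lemma F_Suc:
  assumes b: "b > -1"
  shows "(\<integral>\<^sup>+\<rho>. Hf (Suc N) b \<rho> \<partial>corr_lebesgue (Suc N)) =
    ennreal (Kc N b) * (\<integral>\<^sup>+\<rho>. Hf N (b + 1/2) \<rho> \<partial>corr_lebesgue N)"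
proof -
  interpret product_sigma_finite "\<lambda>_. lborel :: real measure" by standard
  have meas: "Hf (Suc N) b \<in> borel_measurable (PiM (corr_idx N \<union> Pair N ` {..<N}) (\<lambda>_. lborel))"
    using Hf_meas[of "Suc N" b] unfolding corr_lebesgue_def corr_idx_Suc .
  have "(\<integral>\<^sup>+\<rho>. Hf (Suc N) b \<rho> \<partial>corr_lebesgue (Suc N)) =
     (\<integral>\<^sup>+x. (\<integral>\<^sup>+y. Hf (Suc N) b (merge (corr_idx N) (Pair N ` {..<N}) (x, y))
        \<partial>PiM (Pair N ` {..<N}) (\<lambda>_. lborel)) \<partial>PiM (corr_idx N) (\<lambda>_. lborel))"
    unfolding corr_lebesgue_def corr_idx_Suc
    by (rule product_nn_integral_fold[OF corr_idx_disj finite_corr_idx _ meas]) simp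
  also have "\<dots> = (\<integral>\<^sup>+x. ennreal (Kc N b) * Hf N (b + 1/2) x \<partial>corr_lebesgue N)"
    unfolding corr_lebesgue_def[symmetric]
  proof (intro nn_integral_cong)
    fix x assume x: "x \<in> space (corr_lebesgue N)"
    have "(\<integral>\<^sup>+y. Hf (Suc N) b (merge (corr_idx N) (Pair N ` {..<N}) (x, y))
        \<partial>PiM (Pair N ` {..<N}) (\<lambda>_. lborel)) =
       (\<integral>\<^sup>+y. (if x \<in> corr_set N then Gf N (corr_mat x) 1 b (\<lambda>k. y (N, k)) else 0)
        \<partial>PiM (Pair N ` {..<N}) (\<lambda>_. lborel))"
      by (intro nn_integral_cong Hf_merge[OF x])
    also have "\<dots> = ennreal (Kc N b) * Hf N (b + 1/2) x"
    proof (cases "x \<in> corr_set N")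
      case True
      have pd: "pos_def_nat N (corr_mat x)" using True by (simp add: corr_set_def)
      have dpos: "det_nat N (corr_mat x) > 0" by (rule pd_det_pos[OF symm_corr_mat pd])
      have "(\<integral>\<^sup>+y. Gf N (corr_mat x) 1 b (\<lambda>k. y (N, k)) \<partial>PiM (Pair N ` {..<N}) (\<lambda>_. lborel))
          = ennreal (det_nat N (corr_mat x) powr (b + 1/2) * Kc N b)"
        using row_integral[OF b symm_corr_mat pd, of N 1] by simp
      thus ?thesis using True Kc_pos[OF b, of N]
        by (simp add: Hf_def corr_det_def ennreal_mult'[symmetric] mult.commute)
    next
      case False
      then show ?thesis by (simp add: Hf_def)
    qed
    finally show "(\<integral>\<^sup>+y. Hf (Suc N) b (merge (corr_idx N) (Pair N ` {..<N}) (x, y))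
        \<partial>PiM (Pair N ` {..<N}) (\<lambda>_. lborel)) = ennreal (Kc N b) * Hf N (b + 1/2) x" .
  qed
  also have "\<dots> = ennreal (Kc N b) * (\<integral>\<^sup>+\<rho>. Hf N (b + 1/2) \<rho> \<partial>corr_lebesgue N)"
    by (rule nn_integral_cmult) simp
  finally show ?thesis .
qed

lemma F_1: "(\<integral>\<^sup>+\<rho>. Hf (Suc 0) b \<rho> \<partial>corr_lebesgue (Suc 0)) = 1"
proof -
  have idx: "corr_idx (Suc 0) = {}" by (auto simp: corr_idx_def)
  have S: "symm (Suc 0) (corr_mat \<rho>)" for \<rho> by (rule symm_corr_mat)
  have pd: "pos_def_nat (Suc 0) (corr_mat \<rho>)" for \<rho>
    using pd_elim[of 0 0 "corr_mat \<rho>", OF _ S] by (simp add: pd_0 corr_mat_def)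
  have dt: "det_nat (Suc 0) (corr_mat \<rho>) = 1" for \<rho>
    using det_elim[of 0 0 "corr_mat \<rho>"] by (simp add: corr_mat_def det_nat_0)
  have "Hf (Suc 0) b (\<lambda>_. undefined) = 1"
    using pd dt by (simp add: Hf_def corr_set_def corr_det_def corr_lebesgue_def idx)
  thus ?thesis
    by (simp add: corr_lebesgue_def idx PiM_empty nn_integral_count_space_finite)
qed

lemma Gp_Suc: "N \<ge> 1 \<Longrightarrow> Gp (Suc N) b = Gp N b * Beta (b + (real N + 1) / 2) (1/2) ^ N"
  unfolding Gp_def by (simp add: prod.atLeastLessThan_Suc)

lemma Gp_rec: "N \<ge> 1 \<Longrightarrow> Kc N b * Gp N (b + 1/2) = Gp (Suc N) b"
proof (induction N arbitrary: b rule: nat_induct_at_least)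
  case base
  then show ?case by (simp add: Kc_def Gp_def Beta_commute)
next
  case (Suc N)
  have "Kc (Suc N) b * Gp (Suc N) (b + 1/2) =
      (Kc N b * Gp N (b + 1/2)) * (Beta (1/2) (b + real N / 2 + 1) * Beta (b + 1/2 + (real N + 1) / 2) (1/2) ^ N)"
    using Suc.hyps by (simp add: Kc_Suc Gp_Suc)
  also have "Kc N b * Gp N (b + 1/2) = Gp (Suc N) b" by (rule Suc.IH)
  also have "Beta (1/2) (b + real N / 2 + 1) * Beta (b + 1/2 + (real N + 1) / 2) (1/2) ^ N
      = Beta (b + (real (Suc N) + 1) / 2) (1/2) ^ Suc N"
  proof -
    have e: "b + real N / 2 + 1 = b + (2 + real N) / 2" "b + 1/2 + (real N + 1) / 2 = b + (2 + real N) / 2"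
        "b + (real (Suc N) + 1) / 2 = b + (2 + real N) / 2"
      by (simp_all add: field_simps)
    show ?thesis unfolding e by (simp add: Beta_commute)
  qed
  finally show ?case using Suc.hyps by (simp add: Gp_Suc[of "Suc N"])
qed

lemma F_closed:
  assumes "N \<ge> 1"
  shows "\<And>b. b > -1 \<Longrightarrow> (\<integral>\<^sup>+\<rho>. Hf N b \<rho> \<partial>corr_lebesgue N) = ennreal (Gp N b)"
  using assms
proof (induction N rule: nat_induct_at_least)
  case base
  then show ?case by (simp add: F_1 Gp_def)
next
  case (Suc N b)
  have "(\<integral>\<^sup>+\<rho>. Hf (Suc N) b \<rho> \<partial>corr_lebesgue (Suc N)) = ennreal (Kc N b) * ennreal (Gp N (b + 1/2))"
    using F_Suc[OF Suc.prems] Suc.IH[of "b + 1/2"] Suc.prems by simp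
  also have "\<dots> = ennreal (Kc N b * Gp N (b + 1/2))"
    using Kc_pos[OF Suc.prems, of N] by (simp add: ennreal_mult')
  finally show ?case using Gp_rec[OF Suc.hyps] by simp
qed

lemma Gp_pos: "b > -1 \<Longrightarrow> Gp N b > 0"
  unfolding Gp_def
proof (intro prod_pos)
  fix j assume b: "b > -1" and j: "j \<in> {1..<N}"
  have "real j \<ge> 1" using j by auto
  hence "(real j + 1) / 2 \<ge> 1" by simp
  hence "b + (real j + 1) / 2 > 0" using b by linarith
  thus "Beta (b + (real j + 1) / 2) (1/2) ^ j > 0"
    by (simp add: Beta_def)
qed

lemma Phi:
  assumes N: "N \<ge> 1" and b: "b > -1"
  shows "has_bochner_integral (corr_lebesgue N) (\<lambda>\<rho>. indicator (corr_set N) \<rho> * corr_det N \<rho> powr b) (Gp N b)"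
proof (rule has_bochner_integral_nn_integral)
  show "(\<lambda>\<rho>. indicator (corr_set N) \<rho> * corr_det N \<rho> powr b) \<in> borel_measurable (corr_lebesgue N)"
    by measurable
  show "AE x in corr_lebesgue N. 0 \<le> indicator (corr_set N) x * corr_det N x powr b"
    by (rule AE_I2) simp
  show "0 \<le> Gp N b" using Gp_pos[OF b, of N] by simp
  have "(\<integral>\<^sup>+x. ennreal (indicator (corr_set N) x * corr_det N x powr b) \<partial>corr_lebesgue N)
      = (\<integral>\<^sup>+x. Hf N b x \<partial>corr_lebesgue N)"
    by (intro nn_integral_cong) (simp add: Hf_def indicator_def)
  also have "\<dots> = ennreal (Gp N b)" by (rule F_closed[OF N b])
  finally show "(\<integral>\<^sup>+x. ennreal (indicator (corr_set N) x * corr_det N x powr b) \<partial>corr_lebesgue N) = ennreal (Gp N b)" .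
qed

lemma corr_det_pos: "\<rho> \<in> corr_set N \<Longrightarrow> corr_det N \<rho> > 0"
  unfolding corr_set_def corr_det_def using pd_det_pos[OF symm_corr_mat] by auto

lemma ln_Beta_deriv:
  assumes x: "a + c > 0"
  shows "((\<lambda>b. ln (Beta (b + c) (1/2))) has_real_derivative (Digamma (a + c) - Digamma (a + c + 1/2))) (at a)"
proof -
  have nz1: "a + c \<notin> \<int>\<^sub>\<le>\<^sub>0" using x by (auto dest: nonpos_Ints_nonpos)
  have nz2: "a + c + 1/2 \<notin> \<int>\<^sub>\<le>\<^sub>0" using x by (auto dest!: nonpos_Ints_nonpos)
  have Bpos: "Beta (a + c) (1/2) > 0" using x by (simp add: Beta_def)
  have B: "((\<lambda>b. Beta (b + c) (1/2)) has_real_derivative (Beta (a + c) (1/2) * (Digamma (a + c) - Digamma (a + c + 1/2)) * 1)) (at a)"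
    by (rule DERIV_chain2[where f="\<lambda>x. Beta x (1/2)" and g="\<lambda>b. b + c", OF has_field_derivative_Beta1[OF nz1 nz2, where A=UNIV]])
       (auto intro!: derivative_eq_intros)
  have D1: "((\<lambda>b. ln (Beta (b + c) (1/2))) has_real_derivative
      (inverse (Beta (a + c) (1/2)) * (Beta (a + c) (1/2) * (Digamma (a + c) - Digamma (a + c + 1/2)) * 1))) (at a)"
    by (rule DERIV_chain2[OF DERIV_ln[OF Bpos] B])
  have E: "inverse (Beta (a + c) (1/2)) * (Beta (a + c) (1/2) * (Digamma (a + c) - Digamma (a + c + 1/2)) * 1)
     = Digamma (a + c) - Digamma (a + c + 1/2)" using Bpos by simp
  show ?thesis using D1 unfolding E .
qed

definition Lsum :: "nat \<Rightarrow> real \<Rightarrow> real" where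
  "Lsum N a = (\<Sum>j\<in>{1..<N}. real j * (Digamma (a + (real j + 1) / 2) - Digamma (a + (real j + 1) / 2 + 1/2)))"

lemma Gp_deriv:
  assumes a: "a > -1"
  shows "(Gp N has_real_derivative (Gp N a * Lsum N a)) (at a)"
proof -
  define L where "L = (\<lambda>b. \<Sum>j\<in>{1..<N}. real j * ln (Beta (b + (real j + 1) / 2) (1/2)))"
  have pos: "b + (real j + 1) / 2 > 0" if "b > -1" "j \<ge> 1" for b :: real and j :: nat
  proof -
    have "(real j + 1) / 2 \<ge> 1" using that(2) by simp
    thus ?thesis using that(1) by linarith
  qed
  have eq: "Gp N b = exp (L b)" if "b > -1" for b
  proof -
    have "exp (L b) = (\<Prod>j\<in>{1..<N}. exp (real j * ln (Beta (b + (real j + 1) / 2) (1/2))))"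
      unfolding L_def by (rule exp_sum) simp
    also have "\<dots> = Gp N b" unfolding Gp_def
    proof (intro prod.cong refl)
      fix j assume "j \<in> {1..<N}"
      hence "Beta (b + (real j + 1) / 2) (1/2) > 0" using pos[OF that, of j] by (simp add: Beta_def)
      thus "exp (real j * ln (Beta (b + (real j + 1) / 2) (1/2))) = Beta (b + (real j + 1) / 2) (1/2) ^ j"
        by (subst exp_of_nat_mult) simp
    qed
    finally show ?thesis by simp
  qed
  have dL: "(L has_real_derivative Lsum N a) (at a)"
    unfolding L_def Lsum_def
    by (intro DERIV_sum DERIV_cmult ln_Beta_deriv pos[OF a]) auto
  have dE: "((\<lambda>b. exp (L b)) has_real_derivative (exp (L a) * Lsum N a)) (at a)"
    by (rule DERIV_chain2[OF DERIV_exp dL])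
  have ev: "eventually (\<lambda>b. Gp N b = exp (L b)) (at a)"
  proof -
    have "eventually (\<lambda>b. -1 < b) (at a)"
      by (rule order_tendstoD(1)[OF tendsto_ident_at a])
    thus ?thesis by eventually_elim (rule eq)
  qed
  have "(Gp N has_real_derivative (exp (L a) * Lsum N a)) (at a)"
    using has_field_derivative_cong_eventually[OF ev eq[OF a]] dE by simp
  thus ?thesis using eq[OF a] by simp
qed


lemma exp_m1_bound: "\<bar>exp y - 1\<bar> \<le> \<bar>y\<bar> * exp \<bar>y\<bar>" for y :: real
proof (cases "y \<ge> 0")
  case True
  have "1 - y \<le> exp (- y)" using exp_ge_add_one_self[of "-y"] by simp
  hence "exp y * (1 - y) \<le> exp y * exp (- y)" by (intro mult_left_mono) auto
  hence "exp y - y * exp y \<le> 1" by (simp add: exp_minus field_simps)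
  moreover have "exp y \<ge> 1" using True by simp
  ultimately show ?thesis using True by simp
next
  case False
  have "1 + y \<le> exp y" by (rule exp_ge_add_one_self)
  moreover have "exp y \<le> 1" using False by simp
  moreover have "\<bar>y\<bar> \<le> \<bar>y\<bar> * exp \<bar>y\<bar>"
    using mult_left_mono[of 1 "exp \<bar>y\<bar>" "\<bar>y\<bar>"] by simp
  ultimately show ?thesis using False by linarith
qed

lemma powr_diff_bound:
  fixes x s \<delta> :: real
  assumes x: "x > 0" and s: "0 < s" "s \<le> \<delta>"
  shows "\<bar>(x powr s - 1) / s\<bar> \<le> (x powr (2 * \<delta>) + x powr (- (2 * \<delta>))) / \<delta>"
proof -
  define l where "l = ln x"
  have d: "\<delta> > 0" using s by simp
  have xs: "x powr s = exp (s * l)" using x by (simp add: powr_def l_def)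
  have "\<bar>x powr s - 1\<bar> \<le> \<bar>s * l\<bar> * exp \<bar>s * l\<bar>" unfolding xs by (rule exp_m1_bound)
  also have "\<dots> \<le> s * \<bar>l\<bar> * exp (\<delta> * \<bar>l\<bar>)"
    using s by (auto simp: abs_mult intro!: mult_left_mono mult_right_mono)
  finally have "\<bar>(x powr s - 1) / s\<bar> \<le> \<bar>l\<bar> * exp (\<delta> * \<bar>l\<bar>)"
    using s by (simp add: field_simps abs_divide)
  also have "\<bar>l\<bar> \<le> exp (\<delta> * \<bar>l\<bar>) / \<delta>"
  proof -
    have "\<delta> * \<bar>l\<bar> \<le> exp (\<delta> * \<bar>l\<bar>)" using exp_ge_add_one_self[of "\<delta> * \<bar>l\<bar>"] by linarith
    thus ?thesis using d by (simp add: field_simps)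
  qed
  hence "\<bar>l\<bar> * exp (\<delta> * \<bar>l\<bar>) \<le> exp (\<delta> * \<bar>l\<bar>) / \<delta> * exp (\<delta> * \<bar>l\<bar>)"
    by (intro mult_right_mono) auto
  also have "\<dots> = exp (2 * \<delta> * \<bar>l\<bar>) / \<delta>" by (simp add: exp_add[symmetric])
  also have "exp (2 * \<delta> * \<bar>l\<bar>) \<le> x powr (2 * \<delta>) + x powr (- (2 * \<delta>))"
  proof -
    have "x powr (2 * \<delta>) = exp (2 * \<delta> * l)" "x powr (- (2 * \<delta>)) = exp (- (2 * \<delta> * l))"
      using x by (simp_all add: powr_def l_def)
    moreover have "exp (2 * \<delta> * \<bar>l\<bar>) = exp (2 * \<delta> * l) \<or> exp (2 * \<delta> * \<bar>l\<bar>) = exp (- (2 * \<delta> * l))"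
      by (cases "l \<ge> 0") auto
    ultimately show ?thesis by (smt (verit) exp_gt_zero)
  qed
  hence "exp (2 * \<delta> * \<bar>l\<bar>) / \<delta> \<le> (x powr (2 * \<delta>) + x powr (- (2 * \<delta>))) / \<delta>"
    using d by (simp add: divide_right_mono)
  finally show ?thesis .
qed

lemma seq_at0:
  assumes d: "\<delta> > (0::real)"
  shows "filterlim (\<lambda>n. \<delta> * inverse (real (Suc n))) (at 0) sequentially"
proof (subst filterlim_at, intro conjI)
  show "\<forall>\<^sub>F n in sequentially. \<delta> * inverse (real (Suc n)) \<in> UNIV \<and> \<delta> * inverse (real (Suc n)) \<noteq> 0"
    using d by simp
  show "((\<lambda>n. \<delta> * inverse (real (Suc n))) \<longlongrightarrow> 0) sequentially"
    using tendsto_mult_right_zero[OF LIMSEQ_inverse_real_of_nat, of \<delta>] by simp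
qed

lemma powr_diff_lim:
  fixes x :: real
  assumes x: "x > 0" and d: "\<delta> > 0"
  shows "(\<lambda>n. (x powr (\<delta> * inverse (real (Suc n))) - 1) / (\<delta> * inverse (real (Suc n)))) \<longlonglongrightarrow> ln x"
proof -
  have D: "((\<lambda>t. exp (t * ln x)) has_real_derivative (exp (0 * ln x) * ln x)) (at 0)"
    by (auto intro!: derivative_eq_intros)
  hence "((\<lambda>h. (exp ((0 + h) * ln x) - exp (0 * ln x)) / h) \<longlongrightarrow> ln x) (at 0)"
    unfolding DERIV_def by simp
  hence L: "((\<lambda>h. (x powr h - 1) / h) \<longlongrightarrow> ln x) (at 0)"
    using x by (simp add: powr_def)
  show ?thesis using filterlim_compose[OF L seq_at0[OF d]] .
qed

lemma Gp_diff_lim: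
  assumes a: "a > -1" and d: "\<delta> > 0"
  shows "(\<lambda>n. (Gp N (a + \<delta> * inverse (real (Suc n))) - Gp N a) / (\<delta> * inverse (real (Suc n)))) \<longlonglongrightarrow> Gp N a * Lsum N a"
proof -
  have "((\<lambda>h. (Gp N (a + h) - Gp N a) / h) \<longlongrightarrow> Gp N a * Lsum N a) (at 0)"
    using Gp_deriv[OF a, of N] unfolding DERIV_def .
  from filterlim_compose[OF this seq_at0[OF d]] show ?thesis .
qed


lemma log_integral:
  assumes N: "N \<ge> 1" and a: "a > -1"
  shows "integrable (corr_lebesgue N) (\<lambda>\<rho>. indicator (corr_set N) \<rho> * corr_det N \<rho> powr a * ln (corr_det N \<rho>))
    \<and> integral\<^sup>L (corr_lebesgue N) (\<lambda>\<rho>. indicator (corr_set N) \<rho> * corr_det N \<rho> powr a * ln (corr_det N \<rho>))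
      = Gp N a * Lsum N a"
proof -
  define \<delta> where "\<delta> = (a + 1) / 4"
  have d: "\<delta> > 0" using a by (simp add: \<delta>_def)
  define sq where "sq = (\<lambda>n. \<delta> * inverse (real (Suc n)))"
  have sq_pos: "sq n > 0" for n using d by (simp add: sq_def)
  have sq_le: "sq n \<le> \<delta>" for n
    using d by (simp add: sq_def field_simps)
  let ?M = "corr_lebesgue N"
  let ?A = "corr_set N"
  let ?d = "corr_det N"
  define f where "f = (\<lambda>n \<rho>. (indicator ?A \<rho> * ?d \<rho> powr (a + sq n) - indicator ?A \<rho> * ?d \<rho> powr a) / sq n)"
  define g where "g = (\<lambda>\<rho>. indicator ?A \<rho> * ?d \<rho> powr a * ln (?d \<rho>))"
  define w where "w = (\<lambda>\<rho>. (indicator ?A \<rho> * ?d \<rho> powr (a + 2 * \<delta>) + indicator ?A \<rho> * ?d \<rho> powr (a - 2 * \<delta>)) / \<delta>)"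
  have asq: "a + sq n > -1" for n using a sq_pos[of n] by linarith
  have int_a: "integrable ?M (\<lambda>\<rho>. indicator ?A \<rho> * ?d \<rho> powr a)"
    using Phi[OF N a] by (simp add: has_bochner_integral_iff)
  have int_sq: "integrable ?M (\<lambda>\<rho>. indicator ?A \<rho> * ?d \<rho> powr (a + sq n))" for n
    using Phi[OF N asq] by (simp add: has_bochner_integral_iff)
  have int_w: "integrable ?M w"
  proof -
    have e1: "a + 2 * \<delta> > -1" using a d by linarith
    have e2: "a - 2 * \<delta> > -1" using a by (simp add: \<delta>_def field_simps)
    show ?thesis unfolding w_def
      using Phi[OF N e1] Phi[OF N e2]
      by (intro integrable_divide integrable_add) (simp_all add: has_bochner_integral_iff)
  qed
  have fval: "f n \<rho> = (if \<rho> \<in> ?A then ?d \<rho> powr a * ((?d \<rho> powr (sq n) - 1) / sq n) else 0)" for n \<rho>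
  proof (cases "\<rho> \<in> ?A")
    case True
    have "?d \<rho> > 0" using True by (rule corr_det_pos)
    hence "?d \<rho> powr (a + sq n) = ?d \<rho> powr a * ?d \<rho> powr (sq n)" by (simp add: powr_add)
    thus ?thesis using True by (simp add: f_def right_diff_distrib)
  qed (simp add: f_def)
  have lim: "AE \<rho> in ?M. (\<lambda>n. f n \<rho>) \<longlonglongrightarrow> g \<rho>"
  proof (rule AE_I2)
    fix \<rho>
    show "(\<lambda>n. f n \<rho>) \<longlonglongrightarrow> g \<rho>"
    proof (cases "\<rho> \<in> ?A")
      case True
      have "?d \<rho> > 0" using True by (rule corr_det_pos)
      from tendsto_mult_left[OF powr_diff_lim[OF this d], of "?d \<rho> powr a"]
      show ?thesis using True by (simp add: fval g_def sq_def)
    qed (simp add: fval g_def)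
  qed
  have bound: "AE \<rho> in ?M. norm (f n \<rho>) \<le> w \<rho>" for n
  proof (rule AE_I2)
    fix \<rho>
    show "norm (f n \<rho>) \<le> w \<rho>"
    proof (cases "\<rho> \<in> ?A")
      case True
      have dp: "?d \<rho> > 0" using True by (rule corr_det_pos)
      have "norm (f n \<rho>) = ?d \<rho> powr a * \<bar>(?d \<rho> powr (sq n) - 1) / sq n\<bar>"
        using True by (simp add: fval abs_mult)
      also have "\<dots> \<le> ?d \<rho> powr a * ((?d \<rho> powr (2 * \<delta>) + ?d \<rho> powr (- (2 * \<delta>))) / \<delta>)"
        by (intro mult_left_mono powr_diff_bound[OF dp sq_pos sq_le]) simp
      also have "\<dots> = w \<rho>"
        using True dp by (simp add: w_def powr_add[symmetric] field_simps)
      finally show ?thesis .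
    next
      case False
      then show ?thesis by (simp add: fval w_def)
    qed
  qed
  have fm: "f n \<in> borel_measurable ?M" for n unfolding f_def by measurable
  have gm: "g \<in> borel_measurable ?M" unfolding g_def by measurable
  have gint: "integrable ?M g"
    by (rule integrable_dominated_convergence[OF gm fm int_w lim bound])
  have l1: "(\<lambda>n. integral\<^sup>L ?M (f n)) \<longlonglongrightarrow> integral\<^sup>L ?M g"
    by (rule integral_dominated_convergence[OF gm fm int_w lim bound])
  have fint: "integral\<^sup>L ?M (f n) = (Gp N (a + sq n) - Gp N a) / sq n" for n
  proof -
    have "integral\<^sup>L ?M (f n) = (integral\<^sup>L ?M (\<lambda>\<rho>. indicator ?A \<rho> * ?d \<rho> powr (a + sq n)) -
        integral\<^sup>L ?M (\<lambda>\<rho>. indicator ?A \<rho> * ?d \<rho> powr a)) / sq n"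
      unfolding f_def by (simp add: Bochner_Integration.integral_diff[OF int_sq int_a])
    also have "\<dots> = (Gp N (a + sq n) - Gp N a) / sq n"
      using has_bochner_integral_integral_eq[OF Phi[OF N asq]] has_bochner_integral_integral_eq[OF Phi[OF N a]]
      by simp
    finally show ?thesis .
  qed
  have l2: "(\<lambda>n. integral\<^sup>L ?M (f n)) \<longlonglongrightarrow> Gp N a * Lsum N a"
    unfolding fint sq_def by (rule Gp_diff_lim[OF a d])
  have "integral\<^sup>L ?M g = Gp N a * Lsum N a" by (rule LIMSEQ_unique[OF l1 l2])
  thus ?thesis using gint unfolding g_def by simp
qed


theorem mainTheorem3:
  fixes N :: nat and a s :: real
  assumes "N \<ge> 2" and "a > -1" and "s > -1 - a"
  shows "set_integrable (corr_lebesgue N) (corr_set N) (\<lambda>\<rho>. corr_det N \<rho> powr a)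
    \<and> corr_const N a > 0
    \<and> set_integrable (corr_lebesgue N) (corr_set N)
        (\<lambda>\<rho>. corr_det N \<rho> powr s * (corr_det N \<rho> powr a / corr_const N a))
    \<and> (LINT \<rho>:corr_set N|corr_lebesgue N. corr_det N \<rho> powr s * (corr_det N \<rho> powr a / corr_const N a))
        = (\<Prod>j=1..N-1. (Beta (a + s + (real j + 1) / 2) (1/2) / Beta (a + (real j + 1) / 2) (1/2)) ^ j)
    \<and> set_integrable (corr_lebesgue N) (corr_set N)
        (\<lambda>\<rho>. ln (corr_det N \<rho>) * (corr_det N \<rho> powr a / corr_const N a))
    \<and> (LINT \<rho>:corr_set N|corr_lebesgue N. ln (corr_det N \<rho>) * (corr_det N \<rho> powr a / corr_const N a))
        = (\<Sum>j=1..N-1. real j * (Digamma (a + (real j + 1) / 2) - Digamma (a + 1 + real j / 2)))"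
proof -
  have N: "N \<ge> 1" using assms(1) by simp
  have a: "a > -1" by (rule assms(2))
  have as: "a + s > -1" using assms(3) by linarith
  let ?M = "corr_lebesgue N"
  let ?A = "corr_set N"
  let ?d = "corr_det N"
  have Pa: "has_bochner_integral ?M (\<lambda>\<rho>. indicator ?A \<rho> * ?d \<rho> powr a) (Gp N a)" by (rule Phi[OF N a])
  have Pas: "has_bochner_integral ?M (\<lambda>\<rho>. indicator ?A \<rho> * ?d \<rho> powr (a + s)) (Gp N (a + s))" by (rule Phi[OF N as])
  have C: "corr_const N a = Gp N a"
    unfolding corr_const_def set_lebesgue_integral_def
    using has_bochner_integral_integral_eq[OF Pa] by simp
  have Cpos: "Gp N a > 0" by (rule Gp_pos[OF a])
  have S1: "set_integrable ?M ?A (\<lambda>\<rho>. ?d \<rho> powr a)"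
    unfolding set_integrable_def using Pa by (simp add: has_bochner_integral_iff)
  have eq3: "(\<lambda>\<rho>. indicator ?A \<rho> *\<^sub>R (?d \<rho> powr s * (?d \<rho> powr a / corr_const N a)))
      = (\<lambda>\<rho>. indicator ?A \<rho> * ?d \<rho> powr (a + s) / Gp N a)"
  proof
    fix \<rho>
    show "indicator ?A \<rho> *\<^sub>R (?d \<rho> powr s * (?d \<rho> powr a / corr_const N a))
      = indicator ?A \<rho> * ?d \<rho> powr (a + s) / Gp N a"
    proof (cases "\<rho> \<in> ?A")
      case True
      have "?d \<rho> > 0" using True by (rule corr_det_pos)
      thus ?thesis using True by (simp add: C powr_add)
    qed simp
  qed
  have S3: "set_integrable ?M ?A (\<lambda>\<rho>. ?d \<rho> powr s * (?d \<rho> powr a / corr_const N a))"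
    unfolding set_integrable_def eq3 using Pas
    by (intro integrable_divide) (simp add: has_bochner_integral_iff)
  have I3: "(LINT \<rho>:?A|?M. ?d \<rho> powr s * (?d \<rho> powr a / corr_const N a)) = Gp N (a + s) / Gp N a"
    unfolding set_lebesgue_integral_def eq3
    using has_bochner_integral_integral_eq[OF Pas] by simp
  have idx: "{1..N-1} = {1..<N}" using N by auto
  have P: "Gp N (a + s) / Gp N a =
      (\<Prod>j=1..N-1. (Beta (a + s + (real j + 1) / 2) (1/2) / Beta (a + (real j + 1) / 2) (1/2)) ^ j)"
    unfolding idx Gp_def by (simp add: prod_dividef[symmetric] power_divide)
  obtain Li: "integrable ?M (\<lambda>\<rho>. indicator ?A \<rho> * ?d \<rho> powr a * ln (?d \<rho>))"
    and Lv: "integral\<^sup>L ?M (\<lambda>\<rho>. indicator ?A \<rho> * ?d \<rho> powr a * ln (?d \<rho>)) = Gp N a * Lsum N a"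
    using log_integral[OF N a] by blast
  have eq5: "(\<lambda>\<rho>. indicator ?A \<rho> *\<^sub>R (ln (?d \<rho>) * (?d \<rho> powr a / corr_const N a)))
      = (\<lambda>\<rho>. indicator ?A \<rho> * ?d \<rho> powr a * ln (?d \<rho>) / Gp N a)"
    by (simp add: C fun_eq_iff)
  have S5: "set_integrable ?M ?A (\<lambda>\<rho>. ln (?d \<rho>) * (?d \<rho> powr a / corr_const N a))"
    unfolding set_integrable_def eq5 using Li by (rule integrable_divide)
  have I5: "(LINT \<rho>:?A|?M. ln (?d \<rho>) * (?d \<rho> powr a / corr_const N a)) = Lsum N a"
    unfolding set_lebesgue_integral_def eq5 using Lv Cpos by simp
  have Ls: "Lsum N a = (\<Sum>j=1..N-1. real j * (Digamma (a + (real j + 1) / 2) - Digamma (a + 1 + real j / 2)))"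
  proof -
    have e: "a + (real j + 1) / 2 + 1/2 = a + 1 + real j / 2" for j :: nat by (simp add: field_simps)
    show ?thesis unfolding Lsum_def idx by (intro sum.cong refl) (simp only: e)
  qed
  show ?thesis using S1 C Cpos S3 I3 P S5 I5 Ls by simp
qed

end
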